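(* Let $\mathscr H$ be a Hilbert module over $A=M_d(\mathbb C)$. If $S\in\mathscr F(\mathscr H)$ is self-adjoint (with respect to the Hilbert space inner product $\operatorname{tr}[\cdot,\cdot]$), then there exist $\lambda_1,\dots,\lambda_n\in\mathbb R$ and a modular orthonormal family $\{f_1,\dots,f_n\}\subset\mathscr H$ such that $S=\sum_{k=1}^n\lambda_k\, f_k\odot f_k$.
   Context: A Hilbert module over $A=M_d(\mathbb C)$ is a left $A$-module $\mathscr H$ with a map $[\cdot,\cdot]:\mathscr H\times\mathscr H\to A$ such that for all $f,g,h\in\mathscr H$, $a\in A$: $[f+g,h]=[f,h]+[g,h]$; $[af,g]=a[f,g]$; $[g,f]=[f,g]^*$; $[f,f]\ge0$, and $[f,f]=0$ iff $f=0$; and $\mathscr H$ is complete in the norm $f\mapsto\|[f,f]\|^{1/2}$ (equivalently, $\mathscr H$ is a Hilbert space with inner product $\operatorname{tr}[f,g]$). For $f,g\in\mathscr H$, $f\odot g$ is the operator $h\mapsto[h,g]f$, and $\mathscr F(\mathscr H)=\{\sum_{k=1}^n f_k\odot g_k: n\in\mathbb N,\ f_k,g_k\in\mathscr H\}$. A family $\{f_k\}\subset\mathscr H$ is modular orthonormal if $[f_j,f_k]=0$ for $j\ne k$ and each $[f_k,f_k]$ is a minimal (rank-one) projection in $A$. *)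

theory Defs
  imports "HOL-Analysis.Analysis"
begin

text \<open>Matrices in A = M_d(C) are represented as complex^'d^'d with 'd a finite type
 of cardinality d. Matrix product is **, identity is mat 1.\<close>

definition cstar :: "complex^'d^'d \<Rightarrow> complex^'d^'d" where
  "cstar a = (\<chi> i j. cnj (a $ j $ i))"

definition mat_pos :: "complex^'d^'d \<Rightarrow> bool" where
  "mat_pos a \<longleftrightarrow> (\<forall>x::complex^'d.
     Im (\<Sum>i\<in>UNIV. cnj (x $ i) * (a *v x) $ i) = 0 \<and>
     Re (\<Sum>i\<in>UNIV. cnj (x $ i) * (a *v x) $ i) \<ge> 0)"

definition mat_projection :: "complex^'d^'d \<Rightarrow> bool" where
  "mat_projection p \<longleftrightarrow> p ** p = p \<and> cstar p = p"

text \<open>Minimal projection: a nonzero projection with no projection strictly between 0 and it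
 (for projections, q \<le> p iff q ** p = q).\<close>
definition minimal_projection :: "complex^'d^'d \<Rightarrow> bool" where
  "minimal_projection p \<longleftrightarrow> mat_projection p \<and> p \<noteq> 0 \<and>
     (\<forall>q. mat_projection q \<and> q ** p = q \<longrightarrow> q = 0 \<or> q = p)"

text \<open>Hilbert module over M_d(C): left module (action act) with A-valued inner product ip.
 Completeness is stated w.r.t. the Hilbert space norm sqrt(tr[f,f]) (equivalent, as noted).\<close>
definition hilbert_module ::
  "(complex^'d^'d \<Rightarrow> 'h::ab_group_add \<Rightarrow> 'h) \<Rightarrow> ('h \<Rightarrow> 'h \<Rightarrow> complex^'d^'d) \<Rightarrow> bool" where
  "hilbert_module act ip \<longleftrightarrow>
     (\<forall>a b f. act (a ** b) f = act a (act b f)) \<and>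
     (\<forall>a b f. act (a + b) f = act a f + act b f) \<and>
     (\<forall>a f g. act a (f + g) = act a f + act a g) \<and>
     (\<forall>f. act (mat 1) f = f) \<and>
     (\<forall>f g h. ip (f + g) h = ip f h + ip g h) \<and>
     (\<forall>a f g. ip (act a f) g = a ** ip f g) \<and>
     (\<forall>f g. ip g f = cstar (ip f g)) \<and>
     (\<forall>f. mat_pos (ip f f)) \<and>
     (\<forall>f. ip f f = 0 \<longleftrightarrow> f = 0) \<and>
     (\<forall>X :: nat \<Rightarrow> 'h.
        (\<forall>e>0. \<exists>N. \<forall>m\<ge>N. \<forall>n\<ge>N. sqrt (Re (trace (ip (X m - X n) (X m - X n)))) < e) \<longrightarrow>
        (\<exists>L. \<forall>e>0. \<exists>N. \<forall>n\<ge>N. sqrt (Re (trace (ip (X n - L) (X n - L)))) < e))"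

definition odot :: "(complex^'d^'d \<Rightarrow> 'h \<Rightarrow> 'h) \<Rightarrow> ('h \<Rightarrow> 'h \<Rightarrow> complex^'d^'d) \<Rightarrow> 'h \<Rightarrow> 'h \<Rightarrow> 'h \<Rightarrow> 'h" where
  "odot act ip f g = (\<lambda>h. act (ip h g) f)"

definition finite_rank_ops ::
  "(complex^'d^'d \<Rightarrow> 'h::ab_group_add \<Rightarrow> 'h) \<Rightarrow> ('h \<Rightarrow> 'h \<Rightarrow> complex^'d^'d) \<Rightarrow> ('h \<Rightarrow> 'h) set" where
  "finite_rank_ops act ip = {S. \<exists>(n::nat) (fs::nat \<Rightarrow> 'h) gs.
      S = (\<lambda>h. \<Sum>k<n. odot act ip (fs k) (gs k) h)}"

definition modular_orthonormal ::
  "('h \<Rightarrow> 'h \<Rightarrow> complex^'d^'d) \<Rightarrow> nat \<Rightarrow> (nat \<Rightarrow> 'h) \<Rightarrow> bool" where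
  "modular_orthonormal ip n f \<longleftrightarrow>
     (\<forall>j<n. \<forall>k<n. j \<noteq> k \<longrightarrow> ip (f j) (f k) = 0) \<and>
     (\<forall>k<n. minimal_projection (ip (f k) (f k)))"

end

theory Submission
  imports Defs "HOL-Computational_Algebra.Polynomial" "HOL-Computational_Algebra.Fundamental_Theorem_Algebra"
begin

no_notation vector_scalar_mult (infixl \<open>*s\<close> 70)

definition opp :: "('a::zero \<Rightarrow> 'b \<Rightarrow> 'b) \<Rightarrow> ('b \<Rightarrow> 'b) \<Rightarrow> 'a poly \<Rightarrow> 'b \<Rightarrow> 'b::ab_group_add" where
  "opp sc T p y = (\<Sum>k\<le>degree p. sc (coeff p k) ((T^^k) y))"

context vector_space
begin


lemma indep_card_le_dim:
  assumes "independent V" "V \<subseteq> W" "W \<subseteq> span B" "finite B"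
  shows "finite V \<and> card V \<le> dim W"
proof -
  obtain A where A: "A \<subseteq> W" "independent A" "W \<subseteq> span A" "card A = dim W"
    using basis_exists by blast
  have "finite A" using independent_span_bound[OF assms(4) A(2)] A(1) assms(3) by auto
  then show ?thesis using independent_span_bound[OF _ assms(1), of A] A assms by auto
qed

lemma indep_card_le_dim':
  "independent V \<Longrightarrow> V \<subseteq> W \<Longrightarrow> W \<subseteq> span B \<Longrightarrow> finite B \<Longrightarrow> card V \<le> dim W"
  using indep_card_le_dim[of V W B] by simp

lemma dim_strict:
  assumes "subspace W'" "W' \<subseteq> W" "f \<in> W" "f \<notin> W'" "W \<subseteq> span B" "finite B"
  shows "dim W' < dim W"
proof -
  obtain A where A: "A \<subseteq> W'" "independent A" "W' \<subseteq> span A" "card A = dim W'"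
    using basis_exists by blast
  have "span A \<subseteq> W'" using span_minimal[OF A(1) assms(1)] .
  then have fA: "f \<notin> span A" using assms by auto
  then have "independent (insert f A)" using independent_insertI A by blast
  moreover have "insert f A \<subseteq> W" using A assms by auto
  ultimately have fc: "finite (insert f A) \<and> card (insert f A) \<le> dim W"
    by (rule indep_card_le_dim[OF _ _ assms(5) assms(6)])
  have "f \<notin> A" using fA span_base by blast
  then have "card (insert f A) = Suc (card A)" using fc by simp
  then show ?thesis using A(4) fc by simp
qed

context
  fixes T :: "'b \<Rightarrow> 'b"
  assumes Tadd: "\<And>u w. T (u + w) = T u + T w"
    and Tsc: "\<And>c u. T (c *s u) = c *s T u"
begin

lemma T0: "T 0 = 0"
  using Tsc[of 0 0] by simp

lemma Tdiff: "T (u - w) = T u - T w"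
  using Tadd[of "u - w" w] by (simp add: algebra_simps)

lemma Tpow_add: "(T^^k) (u + w) = (T^^k) u + (T^^k) w"
  by (induction k) (auto simp: Tadd)

lemma Tpow_sc: "(T^^k) (c *s u) = c *s (T^^k) u"
  by (induction k) (auto simp: Tsc)

lemma Tpow_diff: "(T^^k) (u - w) = (T^^k) u - (T^^k) w"
  by (induction k) (auto simp: Tdiff)

lemma opp_bound:
  assumes "degree p \<le> n"
  shows "opp scale T p y = (\<Sum>k\<le>n. coeff p k *s (T^^k) y)"
  unfolding opp_def
proof (rule sum.mono_neutral_left)
  show "\<forall>i\<in>{..n} - {..degree p}. coeff p i *s (T ^^ i) y = 0"
    by (auto simp: coeff_eq_0)
qed (use assms in auto)

lemma opp_add: "opp scale T (p + q) y = opp scale T p y + opp scale T q y"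
proof -
  define n where "n = max (degree p) (degree q)"
  have "degree (p + q) \<le> n" unfolding n_def by (rule degree_add_le_max)
  moreover have "degree p \<le> n" "degree q \<le> n" using n_def by auto
  ultimately show ?thesis
    by (simp add: opp_bound scale_left_distrib sum.distrib)
qed

lemma opp_smult: "opp scale T (smult c p) y = c *s opp scale T p y"
proof -
  have "degree (smult c p) \<le> degree p" by simp
  then show ?thesis
    by (simp add: opp_bound[of _ "degree p"] scale_sum_right mult.commute)
qed

lemma opp_pCons0: "opp scale T (pCons 0 q) y = opp scale T q (T y)"
proof -
  have "degree (pCons 0 q) \<le> Suc (degree q)" by simp
  then have "opp scale T (pCons 0 q) y = (\<Sum>k\<le>Suc (degree q). coeff (pCons 0 q) k *s (T^^k) y)"
    by (rule opp_bound)
  also have "\<dots> = (\<Sum>k\<le>degree q. coeff q k *s (T^^k) (T y))"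
    by (subst sum.atMost_Suc_shift) (simp add: funpow_Suc_right del: funpow.simps)
  finally show ?thesis by (simp add: opp_def)
qed

lemma opp_diff: "opp scale T q (u - w) = opp scale T q u - opp scale T q w"
  by (simp add: opp_def Tpow_diff scale_right_diff_distrib sum_subtractf)

lemma opp_sc: "opp scale T q (c *s u) = c *s opp scale T q u"
  by (simp add: opp_def Tpow_sc scale_sum_right mult.commute)

lemma opp_factor: "opp scale T ([:-r, 1:] * q) y = opp scale T q (T y - r *s y)"
proof -
  have eq: "[:-r, 1:] * q = pCons 0 q + smult (-r) q"
    by simp
  show ?thesis
    by (simp only: eq opp_add opp_smult opp_pCons0 opp_diff opp_sc) (simp add: scale_minus_left)
qed

lemma Tpow_in:
  assumes "\<forall>y\<in>W. T y \<in> W" "y \<in> W"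
  shows "(T^^k) y \<in> W"
  using assms by (induction k) auto

lemma krylov:
  assumes "\<forall>y\<in>W. T y \<in> W" "W \<subseteq> span B" "finite B" "y \<in> W"
  shows "\<exists>p. p \<noteq> 0 \<and> opp scale T p y = 0"
proof -
  define N where "N = dim W"
  define v where "v k = (T^^k) y" for k
  have vW: "v k \<in> W" for k using Tpow_in assms unfolding v_def by blast
  obtain c :: "nat \<Rightarrow> 'a" where c0: "\<exists>k\<le>N. c k \<noteq> 0" and csum: "(\<Sum>k\<le>N. c k *s v k) = 0"
  proof (cases "inj_on v {..N}")
    case True
    have "\<not> independent (v ` {..N})"
    proof
      assume "independent (v ` {..N})"
      moreover have "v ` {..N} \<subseteq> W" using vW by blast
      ultimately have "card (v ` {..N}) \<le> dim W"
        by (rule indep_card_le_dim'[OF _ _ assms(2) assms(3)])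
      then have "card (v ` {..N}) \<le> N" unfolding N_def .
      moreover have "card (v ` {..N}) = Suc N" using card_image[OF True] by simp
      ultimately show False by simp
    qed
    then have "dependent (v ` {..N})" by simp
    then have "\<exists>u. (\<exists>w\<in>v ` {..N}. u w \<noteq> 0) \<and> (\<Sum>w\<in>v ` {..N}. u w *s w) = 0"
      using dependent_finite[of "v ` {..N}"] by simp
    then obtain u where u: "\<exists>w\<in>v ` {..N}. u w \<noteq> 0" "(\<Sum>w\<in>v ` {..N}. u w *s w) = 0"
      by blast
    show ?thesis
    proof (rule that[of "\<lambda>k. u (v k)"])
      show "\<exists>k\<le>N. u (v k) \<noteq> 0" using u(1) by auto
      show "(\<Sum>k\<le>N. u (v k) *s v k) = 0"
        using u(2) sum.reindex[OF True, of "\<lambda>w. u w *s w"] by simp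
    qed
  next
    case False
    then obtain i j where ij: "i \<in> {..N}" "j \<in> {..N}" "v i = v j" "i \<noteq> j"
      unfolding inj_on_def by blast
    define c :: "nat \<Rightarrow> 'a" where "c k = (if k = i then 1 else if k = j then -1 else 0)" for k
    have ck: "c k *s v k = (if k = i then v i else 0) - (if k = j then v j else 0)" for k
    proof (cases "k = i")
      case True then show ?thesis using ij(3,4) by (simp add: c_def)
    next
      case False then show ?thesis by (cases "k = j") (simp_all add: c_def scale_minus_left)
    qed
    have "(\<Sum>k\<le>N. c k *s v k) = (\<Sum>k\<le>N. (if k = i then v i else 0)) - (\<Sum>k\<le>N. (if k = j then v j else 0))"
      unfolding ck by (rule sum_subtractf)
    also have "\<dots> = 0" using ij(1,2,3) by simp
    finally have "(\<Sum>k\<le>N. c k *s v k) = 0" .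
    moreover have "c i \<noteq> 0" by (simp add: c_def)
    moreover have "i \<le> N" using ij(1) by simp
    ultimately show ?thesis by (intro that[of c]) auto
  qed
  define p where "p = (\<Sum>k\<le>N. monom (c k) k)"
  have cp: "coeff p k = (if k \<le> N then c k else 0)" for k
    unfolding p_def by (simp add: coeff_sum coeff_monom)
  have "degree p \<le> N" by (rule degree_le) (simp add: cp)
  then have "opp scale T p y = (\<Sum>k\<le>N. coeff p k *s (T^^k) y)" by (rule opp_bound)
  also have "\<dots> = 0" using csum by (simp add: cp v_def)
  finally have "opp scale T p y = 0" .
  moreover have "p \<noteq> 0"
  proof -
    obtain k where "k \<le> N" "c k \<noteq> 0" using c0 by blast
    then have "coeff p k \<noteq> 0" by (simp add: cp)
    then show ?thesis by auto
  qed
  ultimately show ?thesis by blast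
qed

end
end

lemma eig_poly:
  fixes sc :: "complex \<Rightarrow> 'b::ab_group_add \<Rightarrow> 'b"
  assumes vs: "vector_space sc"
    and Tadd: "\<And>u w. T (u + w) = T u + T w"
    and Tsc: "\<And>c u. T (sc c u) = sc c (T u)"
    and WS: "module.subspace sc W" and TW: "\<forall>y\<in>W. T y \<in> W"
  shows "p \<noteq> 0 \<Longrightarrow> y \<in> W \<Longrightarrow> y \<noteq> 0 \<Longrightarrow> opp sc T p y = 0 \<Longrightarrow>
     \<exists>x\<in>W. x \<noteq> 0 \<and> (\<exists>\<mu>. T x = sc \<mu> x)"
proof (induction "degree p" arbitrary: p y rule: less_induct)
  case less
  interpret vector_space sc by (rule vs)
  show ?case
  proof (cases "degree p = 0")
    case True
    then have o: "opp sc T p y = sc (coeff p 0) y" by (simp add: opp_def)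
    have "lead_coeff p \<noteq> 0" using less.prems(1) by simp
    then have c0: "coeff p 0 \<noteq> 0" using True by simp
    have "sc (coeff p 0) y = 0" using o less.prems(4) by simp
    then have "y = 0" using c0 scale_eq_0_iff by blast
    then show ?thesis using less.prems(3) by blast
  next
    case False
    then have "\<not> constant (poly p)" by (simp add: constant_degree)
    then obtain z where "poly p z = 0" using fundamental_theorem_of_algebra by blast
    then obtain q where pq: "p = [:-z, 1:] * q" using poly_eq_0_iff_dvd by blast
    have q0: "q \<noteq> 0" using pq less.prems(1) by auto
    have "degree p = degree [:-z, 1:] + degree q"
      unfolding pq by (rule degree_mult_eq) (use q0 in auto)
    then have dq: "degree q < degree p" by simp
    define w where "w = T y - sc z y"
    show ?thesis
    proof (cases "w = 0")
      case True
      then have "T y = sc z y" unfolding w_def by simp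
      then show ?thesis using less.prems(2,3) by blast
    next
      case False
      have "T y \<in> W" using TW less.prems(2) by blast
      moreover have "sc z y \<in> W" by (rule subspace_scale[OF WS less.prems(2)])
      ultimately have wW: "w \<in> W" unfolding w_def by (rule subspace_diff[OF WS])
      have "opp sc T q w = opp sc T p y"
        unfolding pq w_def by (rule opp_factor[OF Tadd Tsc, symmetric])
      then have "opp sc T q w = 0" using less.prems(4) by simp
      then show ?thesis using less.hyps[OF dq q0 wW False] by blast
    qed
  qed
qed


lemma ifm1[simp]: "(if P then (a::complex) else 0) * b = (if P then a * b else 0)" by simp
lemma ifm2[simp]: "b * (if P then (a::complex) else 0) = (if P then b * a else 0)" by simp
lemma if_conj_eq[simp]: "(if x = r \<and> P then (X::complex) else 0) = (if r = x then (if P then X else 0) else 0)" by auto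
lemma if_conj_eq2[simp]: "(if P \<and> x = r then (X::complex) else 0) = (if r = x then (if P then X else 0) else 0)" by auto

lemma cnj_if[simp]: "cnj (if P then (a::complex) else 0) = (if P then cnj a else 0)" by simp
lemma sum_if_const[simp]: "(\<Sum>k\<in>S. if P then f k else (0::complex)) = (if P then sum f S else 0)" by simp

definition E1 :: "'d::finite \<Rightarrow> 'd \<Rightarrow> complex \<Rightarrow> complex^'d^'d" where
  "E1 r s c = (\<chi> u v. if u = r \<and> v = s then c else 0)"

lemma mat_add: "mat (a + b) = (mat a + mat b :: complex^'d::finite^'d)"
  by (simp add: vec_eq_iff mat_def)

lemma mat_mul: "mat a ** mat b = (mat (a * b) :: complex^'d::finite^'d)"
  by (simp add: vec_eq_iff mat_def matrix_matrix_mult_def sum.delta sum.delta' cong: if_cong)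

lemma mat_comm: "(A :: complex^'d::finite^'d) ** mat c = mat c ** A"
  by (simp add: vec_eq_iff mat_def matrix_matrix_mult_def sum.delta sum.delta' mult.commute cong: if_cong)

lemma mat_mult_entry: "((mat c :: complex^'d::finite^'d) ** A) $ i $ j = c * A $ i $ j"
  by (simp add: mat_def matrix_matrix_mult_def sum.delta sum.delta' cong: if_cong)

lemma cstar_cstar[simp]: "cstar (cstar a) = a"
  by (simp add: cstar_def vec_eq_iff)

lemma cstar_mult: "cstar (a ** b) = cstar b ** (cstar a :: complex^'d::finite^'d)"
  by (simp add: cstar_def vec_eq_iff matrix_matrix_mult_def mult.commute)

lemma cstar_add: "cstar (a + b) = cstar a + cstar b"
  by (simp add: cstar_def vec_eq_iff)

lemma cstar_diff: "cstar (a - b) = cstar a - cstar b"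
  by (simp add: cstar_def vec_eq_iff)

lemma cstar_0[simp]: "cstar 0 = 0"
  by (simp add: cstar_def vec_eq_iff)

lemma cstar_eq_0: "cstar a = 0 \<longleftrightarrow> a = 0"
  by (metis cstar_0 cstar_cstar)

lemma cstar_mat: "cstar (mat c :: complex^'d::finite^'d) = mat (cnj c)"
  by (simp add: cstar_def vec_eq_iff mat_def)

lemma E1_entry: "E1 r s c $ u $ v = (if u = r \<and> v = s then c else 0)"
  by (simp add: E1_def)

lemma mat_E1: "mat c ** E1 r s 1 = E1 r s c"
  by (simp add: vec_eq_iff mat_mult_entry E1_entry)

lemma matrix_decomp: "(a :: complex^'d::finite^'d) = (\<Sum>r\<in>UNIV. \<Sum>s\<in>UNIV. E1 r s (a $ r $ s))"
  by (simp add: vec_eq_iff sum_component E1_entry sum.delta sum.delta' cong: if_cong)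

lemma mat1_decomp: "(mat 1 :: complex^'d::finite^'d) = (\<Sum>r\<in>UNIV. E1 r r 1)"
  by (simp add: vec_eq_iff sum_component E1_entry mat_def sum.delta sum.delta' cong: if_cong)

lemma trace_E1: "trace (E1 j i 1 ** X) = X $ i $ j"
  by (simp add: trace_def matrix_matrix_mult_def E1_entry sum.delta sum.delta' cong: if_cong)

lemma trace_ext: "(\<And>a. trace (a ** X) = trace (a ** Y)) \<Longrightarrow> X = (Y :: complex^'d::finite^'d)"
  by (metis trace_E1 vec_eq_iff)

lemma sandwich: "E1 i i c ** Z ** cstar (E1 i i c) = E1 i i (c * Z $ i $ i * cnj c)"
  by (simp add: vec_eq_iff matrix_matrix_mult_def E1_entry cstar_def sum.delta sum.delta' cong: if_cong)

lemma E1_idem: "E1 i i 1 ** E1 i i c = E1 i i c"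
  by (simp add: vec_eq_iff matrix_matrix_mult_def E1_entry sum.delta sum.delta' cong: if_cong)

lemma E1_nz: "E1 i i 1 \<noteq> 0"
  by (auto simp: vec_eq_iff E1_entry)

lemma minproj_E1: "minimal_projection (E1 i i 1)"
  unfolding minimal_projection_def mat_projection_def
proof (intro conjI allI impI E1_nz)
  show "E1 i i 1 ** E1 i i 1 = E1 i i 1" by (rule E1_idem)
  show "cstar (E1 i i 1) = E1 i i 1" by (auto simp: vec_eq_iff cstar_def E1_entry)
  fix q :: "complex^'a^'a"
  assume q: "(q ** q = q \<and> cstar q = q) \<and> q ** E1 i i 1 = q"
  have col: "q $ r $ s = (if s = i then q $ r $ i else 0)" for r s
    using arg_cong[OF q[THEN conjunct2], of "\<lambda>m. m $ r $ s"]
    by (simp add: matrix_matrix_mult_def E1_entry sum.delta sum.delta' cong: if_cong) (metis (full_types))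
  have herm: "q $ r $ s = cnj (q $ s $ r)" for r s
    using arg_cong[OF q[THEN conjunct1, THEN conjunct2], of "\<lambda>m. m $ r $ s"]
    by (simp add: cstar_def)
  have zero: "q $ r $ s = 0" if "\<not> (r = i \<and> s = i)" for r s
    using col[of r s] col[of s r] herm[of r s] that by (auto split: if_splits)
  have "(q ** q) $ i $ i = q $ i $ i * q $ i $ i"
    unfolding matrix_matrix_mult_def using zero
    by (simp add: sum.remove[of UNIV i])
  then have "q $ i $ i * q $ i $ i = q $ i $ i" using q by simp
  then have q01: "q $ i $ i = 0 \<or> q $ i $ i = 1" by (metis mult_cancel_left2 mult_cancel_right1 mult_zero_left)
  have qe: "q $ r $ s = (if r = i \<and> s = i then q $ i $ i else 0)" for r s
    using zero[of r s] by (cases "r = i \<and> s = i") auto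
  show "q = 0 \<or> q = E1 i i 1"
  proof (cases "q $ i $ i = 0")
    case True
    have "q $ r $ s = 0" for r s using qe[of r s] True by auto
    then have "q = 0" by (simp add: vec_eq_iff)
    then show ?thesis ..
  next
    case False
    with \<open>q $ i $ i = 0 \<or> q $ i $ i = 1\<close> have q1: "q $ i $ i = 1" by simp
    have "q $ r $ s = E1 i i 1 $ r $ s" for r s using qe[of r s] q1 by (auto simp: E1_entry)
    then have "q = E1 i i 1" by (simp add: vec_eq_iff)
    then show ?thesis ..
  qed
qed


lemma mmul_0r[simp]: "(A :: complex^'d::finite^'d) ** 0 = 0"
  by (simp add: vec_eq_iff matrix_matrix_mult_def)
lemma mmul_0l[simp]: "0 ** (A :: complex^'d::finite^'d) = 0"
  by (simp add: vec_eq_iff matrix_matrix_mult_def)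
lemma mmul_diffr: "(A :: complex^'d::finite^'d) ** (B - C) = A ** B - A ** C"
  by (simp add: vec_eq_iff matrix_matrix_mult_def algebra_simps sum_subtractf)
lemma mmul_diffl: "((B - C) :: complex^'d::finite^'d) ** A = B ** A - C ** A"
  by (simp add: vec_eq_iff matrix_matrix_mult_def algebra_simps sum_subtractf)
lemma E1_zero: "E1 r s 0 = 0"
  by (simp add: vec_eq_iff E1_entry)
lemma cstar_E1: "cstar (E1 i i 1) = E1 i i 1"
  by (auto simp: vec_eq_iff cstar_def E1_entry)
lemma quad_axis: "(\<Sum>k\<in>UNIV. cnj (axis i 1 $ k) * (P *v axis i (1::complex)) $ k) = P $ i $ i"
  by (simp add: axis_def matrix_vector_mult_def sum.delta sum.delta' cong: if_cong)

locale hm =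
  fixes act :: "complex^'d::finite^'d \<Rightarrow> 'h::ab_group_add \<Rightarrow> 'h"
    and ip :: "'h \<Rightarrow> 'h \<Rightarrow> complex^'d^'d"
  assumes H: "hilbert_module act ip"
begin

lemmas HH = H[unfolded hilbert_module_def]

lemma act_mult: "act (a ** b) f = act a (act b f)"
  by (rule HH[THEN conjunct1, rule_format])
lemma act_addl: "act (a + b) f = act a f + act b f"
  by (rule HH[THEN conjunct2, THEN conjunct1, rule_format])
lemma act_addr: "act a (f + g) = act a f + act a g"
  by (rule HH[THEN conjunct2, THEN conjunct2, THEN conjunct1, rule_format])
lemma act_one: "act (mat 1) f = f"
  by (rule HH[THEN conjunct2, THEN conjunct2, THEN conjunct2, THEN conjunct1, rule_format])
lemma ip_add: "ip (f + g) h = ip f h + ip g h"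
  by (rule HH[THEN conjunct2, THEN conjunct2, THEN conjunct2, THEN conjunct2, THEN conjunct1, rule_format])
lemma ip_act: "ip (act a f) g = a ** ip f g"
  by (rule HH[THEN conjunct2, THEN conjunct2, THEN conjunct2, THEN conjunct2, THEN conjunct2, THEN conjunct1, rule_format])
lemma ip_sym: "ip g f = cstar (ip f g)"
  by (rule HH[THEN conjunct2, THEN conjunct2, THEN conjunct2, THEN conjunct2, THEN conjunct2, THEN conjunct2, THEN conjunct1, rule_format])
lemma ip_pos: "mat_pos (ip f f)"
  by (rule HH[THEN conjunct2, THEN conjunct2, THEN conjunct2, THEN conjunct2, THEN conjunct2, THEN conjunct2, THEN conjunct2, THEN conjunct1, rule_format])
lemma ip_zero: "ip f f = 0 \<longleftrightarrow> f = 0"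
  by (rule HH[THEN conjunct2, THEN conjunct2, THEN conjunct2, THEN conjunct2, THEN conjunct2, THEN conjunct2, THEN conjunct2, THEN conjunct2, THEN conjunct1, rule_format])

lemma act_0l[simp]: "act 0 f = 0"
  using act_addl[of 0 0 f] by simp
lemma act_0r[simp]: "act a 0 = 0"
  using act_addr[of a 0 0] by simp
lemma act_diffr: "act a (f - g) = act a f - act a g"
  using act_addr[of a "f - g" g] by (simp add: algebra_simps)
lemma act_diffl: "act (a - b) f = act a f - act b f"
  using act_addl[of "a - b" b f] by (simp add: algebra_simps)
lemma act_sumr: "act a (\<Sum>k\<in>K. F k) = (\<Sum>k\<in>K. act a (F k))"
  by (induction K rule: infinite_finite_induct) (auto simp: act_addr)
lemma act_suml: "act (\<Sum>k\<in>K. F k) f = (\<Sum>k\<in>K. act (F k) f)"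
  by (induction K rule: infinite_finite_induct) (auto simp: act_addl)

lemma ip_0l[simp]: "ip 0 g = 0"
  using ip_add[of 0 0 g] by simp
lemma ip_0r[simp]: "ip g 0 = 0"
  using ip_sym[of g 0] by simp
lemma ip_diffl: "ip (f - g) h = ip f h - ip g h"
  using ip_add[of "f - g" g h] by (simp add: algebra_simps)
lemma ip_addr: "ip h (f + g) = ip h f + ip h g"
  by (metis ip_sym ip_add cstar_add)
lemma ip_diffr: "ip h (f - g) = ip h f - ip h g"
  by (metis ip_sym ip_diffl cstar_diff)
lemma ip_actr: "ip f (act b g) = ip f g ** cstar b"
  by (metis ip_sym ip_act cstar_mult cstar_cstar)
lemma ip_suml: "ip (\<Sum>k\<in>K. F k) g = (\<Sum>k\<in>K. ip (F k) g)"
  by (induction K rule: infinite_finite_induct) (auto simp: ip_add)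

definition sc :: "complex \<Rightarrow> 'h \<Rightarrow> 'h" where "sc c h = act (mat c) h"

lemma vs: "vector_space sc"
  unfolding vector_space_def sc_def
  by (simp add: act_addr act_addl mat_add act_mult[symmetric] mat_mul act_one)

sublocale vs: vector_space sc by (rule vs)

definition submod :: "'h set \<Rightarrow> bool" where
  "submod W \<longleftrightarrow> 0 \<in> W \<and> (\<forall>x\<in>W. \<forall>y\<in>W. x + y \<in> W) \<and> (\<forall>a. \<forall>x\<in>W. act a x \<in> W)"

lemma submod_subspace: "submod W \<Longrightarrow> module.subspace sc W"
  using vs unfolding submod_def module.subspace_def[OF vs[unfolded module_iff_vector_space[symmetric]]] sc_def
  by blast

lemma submod_diff: "submod W \<Longrightarrow> x \<in> W \<Longrightarrow> y \<in> W \<Longrightarrow> x - y \<in> W"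
proof -
  assume W: "submod W" "x \<in> W" "y \<in> W"
  have "act (mat (-1)) y = - y"
    using act_addl[of "mat 1" "mat (-1)" y] by (simp add: mat_add[symmetric] act_one eq_neg_iff_add_eq_0) (simp add: add.commute)
  then show ?thesis using W unfolding submod_def by (metis diff_conv_add_uminus)
qed


lemma ip_sandwich: "ip (act a x) (act a x) = a ** ip x x ** cstar a"
  by (simp add: ip_act ip_actr matrix_mul_assoc)

lemma extract_mp:
  assumes "x \<noteq> 0"
  shows "\<exists>i c. ip (act (E1 i i c) x) (act (E1 i i c) x) = E1 i i 1"
proof -
  define P where "P = ip x x"
  have "\<exists>i. P $ i $ i \<noteq> 0"
  proof (rule ccontr)
    assume "\<not> (\<exists>i. P $ i $ i \<noteq> 0)"
    then have P0: "P $ i $ i = 0" for i by simp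
    have z: "act (E1 i i 1) x = 0" for i
    proof -
      have "ip (act (E1 i i 1) x) (act (E1 i i 1) x) = E1 i i (1 * P $ i $ i * cnj 1)"
        unfolding ip_sandwich P_def[symmetric] by (rule sandwich)
      also have "\<dots> = 0" using P0 by (simp add: E1_zero)
      finally show ?thesis using ip_zero by blast
    qed
    have "x = act (mat 1) x" by (simp add: act_one)
    also have "\<dots> = (\<Sum>r\<in>UNIV. act (E1 r r 1) x)" by (simp add: mat1_decomp act_suml)
    also have "\<dots> = 0" by (simp add: z)
    finally show False using assms by simp
  qed
  then obtain i where Pi: "P $ i $ i \<noteq> 0" by blast
  have mp: "mat_pos P" unfolding P_def by (rule ip_pos)
  have "Im (P $ i $ i) = 0" "Re (P $ i $ i) \<ge> 0"
    using mp[unfolded mat_pos_def, rule_format, of "axis i 1"] by (simp_all add: quad_axis)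
  then have Pr: "P $ i $ i = complex_of_real (Re (P $ i $ i))" and rpos: "Re (P $ i $ i) > 0"
    using Pi by (auto simp: complex_eq_iff)
  define r where "r = Re (P $ i $ i)"
  have Pr': "P $ i $ i = complex_of_real r" using Pr unfolding r_def .
  have r0: "r > 0" using rpos unfolding r_def .
  define c where "c = complex_of_real (1 / sqrt r)"
  have cc0: "c * P $ i $ i * cnj c = complex_of_real (1 / sqrt r * r * (1 / sqrt r))"
    unfolding Pr' c_def by (simp only: complex_cnj_complex_of_real of_real_mult)
  have sq: "sqrt r * sqrt r = r" using r0 by simp
  have one: "1 / sqrt r * r * (1 / sqrt r) = 1"
    using r0 sq by (simp add: field_simps)
  have cc: "c * P $ i $ i * cnj c = 1" using cc0 one by simp
  have "ip (act (E1 i i c) x) (act (E1 i i c) x) = E1 i i 1"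
    unfolding ip_sandwich P_def[symmetric] sandwich cc ..
  then show ?thesis by blast
qed

definition Sprop :: "('h \<Rightarrow> 'h) \<Rightarrow> bool" where
  "Sprop S \<longleftrightarrow> (\<forall>u w. S (u + w) = S u + S w) \<and> (\<forall>a h. S (act a h) = act a (S h)) \<and>
     (\<forall>h g. ip (S h) g = ip h (S g))"

lemma mu_real:
  assumes "Sprop S" "S x = act (mat \<mu>) x" "x \<noteq> 0"
  shows "\<mu> = complex_of_real (Re \<mu>)"
proof -
  define P where "P = ip x x"
  have "ip (S x) x = ip x (S x)" using assms(1) unfolding Sprop_def by blast
  then have "mat \<mu> ** P = P ** cstar (mat \<mu>)" unfolding assms(2) P_def ip_act ip_actr .
  then have eq: "mat \<mu> ** P = mat (cnj \<mu>) ** P" by (simp add: cstar_mat mat_comm)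
  have "P \<noteq> 0" unfolding P_def using assms(3) ip_zero by simp
  then obtain r s where rs: "P $ r $ s \<noteq> 0" by (auto simp: vec_eq_iff)
  have "\<mu> * P $ r $ s = cnj \<mu> * P $ r $ s"
    using arg_cong[OF eq, of "\<lambda>m. m $ r $ s"] by (simp add: mat_mult_entry)
  then have "\<mu> = cnj \<mu>" using rs by simp
  then show ?thesis by (simp add: complex_eq_iff)
qed


lemma Sprop_D:
  assumes "Sprop S"
  shows "S (u + w) = S u + S w" "S (act a h) = act a (S h)" "ip (S h) g = ip h (S g)"
  using assms unfolding Sprop_def by blast+

lemma submod_D:
  assumes "submod W"
  shows "0 \<in> W" "x \<in> W \<Longrightarrow> y \<in> W \<Longrightarrow> x + y \<in> W" "x \<in> W \<Longrightarrow> act a x \<in> W"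
  using assms unfolding submod_def by blast+

lemma main_ind:
  assumes "submod W" "W \<subseteq> vs.span B" "finite B" "Sprop S" "\<forall>h. S h \<in> W"
  shows "\<exists>n l f. modular_orthonormal ip n f \<and> (\<forall>k<n. f k \<in> W) \<and>
     S = (\<lambda>h. \<Sum>k<n. act (mat (complex_of_real (l k))) (odot act ip (f k) (f k) h))"
  using assms
proof (induction "vs.dim W" arbitrary: W S rule: less_induct)
  case less
  have SW: "\<forall>y\<in>W. S y \<in> W" using less.prems(5) by blast
  have Sadd: "\<And>u w. S (u + w) = S u + S w" using Sprop_D(1)[OF less.prems(4)] .
  have Ssc: "\<And>c u. S (sc c u) = sc c (S u)" unfolding sc_def using Sprop_D(2)[OF less.prems(4)] .
  have sub: "vs.subspace W" by (rule submod_subspace[OF less.prems(1)])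
  show ?case
  proof (cases "\<exists>x\<in>W. x \<noteq> 0")
    case False
    then have S0: "S h = 0" for h using less.prems(5) by blast
    show ?thesis
      by (rule exI[of _ 0]) (simp add: modular_orthonormal_def fun_eq_iff S0)
  next
    case True
    then obtain x0 where x0: "x0 \<in> W" "x0 \<noteq> 0" by blast
    obtain p where p: "p \<noteq> 0" "opp sc S p x0 = 0"
      using vs.krylov[OF Sadd Ssc SW less.prems(2) less.prems(3) x0(1)] by blast
    obtain x \<mu> where x: "x \<in> W" "x \<noteq> 0" "S x = sc \<mu> x"
      using eig_poly[OF vs Sadd Ssc sub SW p(1) x0(1) x0(2) p(2)] by blast
    have mr: "\<mu> = complex_of_real (Re \<mu>)"
      by (rule mu_real[OF less.prems(4) x(3)[unfolded sc_def] x(2)])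
    obtain i c where ic: "ip (act (E1 i i c) x) (act (E1 i i c) x) = E1 i i 1"
      using extract_mp[OF x(2)] by blast
    define f where "f = act (E1 i i c) x"
    have ff: "ip f f = E1 i i 1" using ic unfolding f_def .
    have fW: "f \<in> W" unfolding f_def by (rule submod_D(3)[OF less.prems(1) x(1)])
    have Sf: "S f = act (mat \<mu>) f"
    proof -
      have "S f = act (E1 i i c) (act (mat \<mu>) x)"
        unfolding f_def Sprop_D(2)[OF less.prems(4)] x(3) sc_def ..
      also have "\<dots> = act (mat \<mu>) f"
        unfolding f_def act_mult[symmetric] mat_comm ..
      finally show ?thesis .
    qed
    have pf: "act (E1 i i 1) f = f"
      unfolding f_def act_mult[symmetric] E1_idem ..
    have ipf: "ip h f ** E1 i i 1 = ip h f" for h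
    proof -
      have "ip h f = ip h (act (E1 i i 1) f)" using pf by simp
      also have "\<dots> = ip h f ** E1 i i 1" unfolding ip_actr cstar_E1 ..
      finally show ?thesis by simp
    qed
    define S' where "S' h = S h - act (mat \<mu>) (odot act ip f f h)" for h
    define W' where "W' = {y \<in> W. ip y f = 0}"
    have subW': "submod W'"
      unfolding submod_def W'_def
      using submod_D[OF less.prems(1)] by (auto simp: ip_add ip_act)
    have W'W: "W' \<subseteq> W" unfolding W'_def by blast
    have fW': "f \<notin> W'" unfolding W'_def using ff E1_nz[of i] by simp
    have dimlt: "vs.dim W' < vs.dim W"
      by (rule vs.dim_strict[OF submod_subspace[OF subW'] W'W fW fW' less.prems(2) less.prems(3)])
    have spanW': "W' \<subseteq> vs.span B" using W'W less.prems(2) by blast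
    have odot_add: "odot act ip f f (u + w) = odot act ip f f u + odot act ip f f w" for u w
      by (simp add: odot_def ip_add act_addl)
    have odot_act: "odot act ip f f (act a h) = act a (odot act ip f f h)" for a h
      by (simp add: odot_def ip_act act_mult)
    have mu_act: "act (mat \<mu>) (act a y) = act a (act (mat \<mu>) y)" for a y
      by (simp add: act_mult[symmetric] mat_comm)
    have cmu: "cstar (mat \<mu>) = mat \<mu>"
      using mr by (metis cstar_mat complex_cnj_complex_of_real)
    have SpS': "Sprop S'"
      unfolding Sprop_def
    proof (intro conjI allI)
      fix u w
      show "S' (u + w) = S' u + S' w"
        unfolding S'_def Sprop_D(1)[OF less.prems(4)] odot_add act_addr by simp
    next
      fix a h
      show "S' (act a h) = act a (S' h)"
        unfolding S'_def Sprop_D(2)[OF less.prems(4)] odot_act mu_act act_diffr ..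
    next
      fix h g
      have "ip (act (mat \<mu>) (odot act ip f f h)) g = mat \<mu> ** (ip h f ** ip f g)"
        by (simp add: odot_def ip_act)
      moreover have "ip h (act (mat \<mu>) (odot act ip f f g)) = (ip h f ** ip f g) ** mat \<mu>"
        by (simp add: odot_def ip_actr cmu matrix_mul_assoc ip_sym[of f g])
      ultimately show "ip (S' h) g = ip h (S' g)"
        unfolding S'_def ip_diffl ip_diffr Sprop_D(3)[OF less.prems(4)] by (simp add: mat_comm)
    qed
    have S'W': "\<forall>h. S' h \<in> W'"
    proof
      fix h
      have "S' h \<in> W" unfolding S'_def odot_def
        using submod_diff[OF less.prems(1)] submod_D(3)[OF less.prems(1) fW] less.prems(5)
        by (simp add: act_mult[symmetric])
      moreover have "ip (S' h) f = 0"
      proof -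
        have "ip (S' h) f = ip h (S f) - mat \<mu> ** (ip h f ** ip f f)"
          unfolding S'_def ip_diffl Sprop_D(3)[OF less.prems(4)] by (simp add: odot_def ip_act)
        also have "\<dots> = ip h f ** mat \<mu> - mat \<mu> ** ip h f"
          unfolding Sf ip_actr cmu ff ipf ..
        also have "\<dots> = 0" by (simp add: mat_comm)
        finally show ?thesis .
      qed
      ultimately show "S' h \<in> W'" unfolding W'_def by blast
    qed
    obtain n l fs where IH: "modular_orthonormal ip n fs" "\<forall>k<n. fs k \<in> W'"
      "S' = (\<lambda>h. \<Sum>k<n. act (mat (complex_of_real (l k))) (odot act ip (fs k) (fs k) h))"
      using less.hyps[OF dimlt subW' spanW' less.prems(3) SpS' S'W'] by blast
    define F where "F = fs(n := f)"
    define L where "L = l(n := Re \<mu>)"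
    have orth: "ip (fs k) f = 0" if "k < n" for k
      using IH(2) that unfolding W'_def by blast
    have MO: "modular_orthonormal ip (Suc n) F"
      unfolding modular_orthonormal_def
    proof (intro conjI allI impI)
      fix j k assume jk: "j < Suc n" "k < Suc n" "j \<noteq> k"
      show "ip (F j) (F k) = 0"
      proof (cases "j = n")
        case True
        then have "k < n" using jk by simp
        then show ?thesis using True orth[of k] jk by (simp add: F_def ip_sym[of f])
      next
        case False
        then have j: "j < n" using jk by simp
        show ?thesis
        proof (cases "k = n")
          case True then show ?thesis using orth[OF j] jk by (simp add: F_def)
        next
          case False
          then show ?thesis using IH(1) j jk unfolding modular_orthonormal_def F_def by simp
        qed
      qed
    next
      fix k assume k: "k < Suc n"
      show "minimal_projection (ip (F k) (F k))"
      proof (cases "k = n")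
        case True then show ?thesis by (simp add: F_def ff minproj_E1)
      next
        case False then show ?thesis using IH(1) k unfolding modular_orthonormal_def F_def by simp
      qed
    qed
    have FW: "\<forall>k<Suc n. F k \<in> W"
      using IH(2) fW W'W unfolding F_def by (auto simp: less_Suc_eq)
    have "S = (\<lambda>h. \<Sum>k<Suc n. act (mat (complex_of_real (L k))) (odot act ip (F k) (F k) h))"
    proof
      fix h
      have "S h = S' h + act (mat \<mu>) (odot act ip f f h)" unfolding S'_def by simp
      also have "S' h = (\<Sum>k<n. act (mat (complex_of_real (L k))) (odot act ip (F k) (F k) h))"
        unfolding IH(3) F_def L_def by (intro sum.cong) auto
      also have "act (mat \<mu>) (odot act ip f f h) = act (mat (complex_of_real (L n))) (odot act ip (F n) (F n) h)"
        unfolding F_def L_def using mr by simp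
      finally show "S h = (\<Sum>k<Suc n. act (mat (complex_of_real (L k))) (odot act ip (F k) (F k) h))"
        by simp
    qed
    then show ?thesis using MO FW by blast
  qed
qed

end


theorem lemma2:
  fixes act :: "complex^'d^'d \<Rightarrow> 'h::ab_group_add \<Rightarrow> 'h"
    and ip :: "'h \<Rightarrow> 'h \<Rightarrow> complex^'d^'d"
    and S :: "'h \<Rightarrow> 'h"
  assumes "hilbert_module act ip"
    and "S \<in> finite_rank_ops act ip"
    and "\<forall>h g. trace (ip (S h) g) = trace (ip h (S g))"
  shows "\<exists>(n::nat) (l::nat \<Rightarrow> real) (f::nat \<Rightarrow> 'h).
           modular_orthonormal ip n f \<and>
           S = (\<lambda>h. \<Sum>k<n. act (mat (complex_of_real (l k))) (odot act ip (f k) (f k) h))"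
proof -
  interpret hm act ip by unfold_locales (rule assms(1))
  obtain n :: nat and fs gs where Sdef: "S = (\<lambda>h. \<Sum>k<n. odot act ip (fs k) (gs k) h)"
    using assms(2) unfolding finite_rank_ops_def by blast
  have Sadd: "S (u + w) = S u + S w" for u w
    unfolding Sdef odot_def by (simp add: ip_add act_addl sum.distrib)
  have Slin: "S (act a h) = act a (S h)" for a h
    unfolding Sdef odot_def by (simp add: ip_act act_mult act_sumr)
  have Sadj: "ip (S h) g = ip h (S g)" for h g
  proof (rule trace_ext)
    fix a
    have "trace (a ** ip (S h) g) = trace (ip (S (act a h)) g)" by (simp add: Slin ip_act)
    also have "\<dots> = trace (ip (act a h) (S g))" using assms(3) by blast
    also have "\<dots> = trace (a ** ip h (S g))" by (simp add: ip_act)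
    finally show "trace (a ** ip (S h) g) = trace (a ** ip h (S g))" .
  qed
  have SP: "Sprop S" unfolding Sprop_def using Sadd Slin Sadj by blast
  define W where "W = {y. \<exists>a. y = (\<Sum>k<n. act (a k) (fs k))}"
  have subW: "submod W"
    unfolding submod_def
  proof (intro conjI ballI allI)
    show "0 \<in> W" unfolding W_def by (rule CollectI, rule exI[of _ "\<lambda>k. 0"]) simp
  next
    fix x y assume "x \<in> W" "y \<in> W"
    then obtain a b where "x = (\<Sum>k<n. act (a k) (fs k))" "y = (\<Sum>k<n. act (b k) (fs k))"
      unfolding W_def by blast
    then have "x + y = (\<Sum>k<n. act (a k + b k) (fs k))" by (simp add: act_addl sum.distrib)
    then show "x + y \<in> W" unfolding W_def by (intro CollectI exI[of _ "\<lambda>k. a k + b k"])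
  next
    fix c x assume "x \<in> W"
    then obtain a where "x = (\<Sum>k<n. act (a k) (fs k))" unfolding W_def by blast
    then have "act c x = (\<Sum>k<n. act (c ** a k) (fs k))" by (simp add: act_sumr act_mult)
    then show "act c x \<in> W" unfolding W_def by (intro CollectI exI[of _ "\<lambda>k. c ** a k"])
  qed
  define B where "B = (\<lambda>(r, s, k). act (E1 r s 1) (fs k)) ` (UNIV \<times> UNIV \<times> {..<n})"
  have finB: "finite B" unfolding B_def by simp
  have actspan: "act a (fs k) \<in> vs.span B" if "k < n" for a k
  proof -
    have "act a (fs k) = (\<Sum>r\<in>UNIV. \<Sum>s\<in>UNIV. act (E1 r s (a $ r $ s)) (fs k))"
      by (subst matrix_decomp) (simp add: act_suml)
    also have "\<dots> = (\<Sum>r\<in>UNIV. \<Sum>s\<in>UNIV. sc (a $ r $ s) (act (E1 r s 1) (fs k)))"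
      by (simp add: sc_def act_mult[symmetric] mat_E1)
    also have "\<dots> \<in> vs.span B"
    proof (intro vs.span_sum vs.span_scale vs.span_base)
      fix r s show "act (E1 r s 1) (fs k) \<in> B" unfolding B_def using that by force
    qed
    finally show ?thesis .
  qed
  have spanW: "W \<subseteq> vs.span B"
  proof
    fix y assume "y \<in> W"
    then obtain a where "y = (\<Sum>k<n. act (a k) (fs k))" unfolding W_def by blast
    also have "\<dots> \<in> vs.span B" by (intro vs.span_sum actspan) simp
    finally show "y \<in> vs.span B" .
  qed
  have SW: "\<forall>h. S h \<in> W"
    unfolding Sdef odot_def W_def by (intro allI CollectI exI[of _ "\<lambda>k. ip _ (gs k)"]) (rule refl)
  show ?thesis using main_ind[OF subW spanW finB SP SW] by blast
qed

end
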